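(* Let $(X(t))_{t\ge 0}$ be a reversible irreducible continuous-time Markov chain on a finite state space $\Omega$ with semigroup $P_t$ and stationary distribution $\pi$. Define \[ d^H(t):=\max_{x\in\Omega}\sqrt{\sum_{y\in\Omega}\Big(\sqrt{P_t(x,y)}-\sqrt{\pi(y)}\Big)^2}. \] Then for every $t\ge 0$, \[ d^H(2t)\le 7\,\big(d^H(t)\big)^{5/4}. \] *)

theory Defs
  imports Complex_Main
begin

text \<open>A continuous-time Markov chain on a finite state space 'a is given by its
generator (Q-matrix) Q. Its semigroup is P_t = exp(t Q), defined by the
exponential series with matrix powers of Q.\<close>

fun ctmc_mpow :: "('a::finite \<Rightarrow> 'a \<Rightarrow> real) \<Rightarrow> nat \<Rightarrow> 'a \<Rightarrow> 'a \<Rightarrow> real" where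
  "ctmc_mpow Q 0 x y = (if x = y then 1 else 0)"
| "ctmc_mpow Q (Suc n) x y = (\<Sum>z\<in>UNIV. Q x z * ctmc_mpow Q n z y)"

definition ctmc_semigroup :: "('a::finite \<Rightarrow> 'a \<Rightarrow> real) \<Rightarrow> real \<Rightarrow> 'a \<Rightarrow> 'a \<Rightarrow> real" where
  "ctmc_semigroup Q t x y = (\<Sum>n. t ^ n / fact n * ctmc_mpow Q n x y)"

definition ctmc_generator :: "('a::finite \<Rightarrow> 'a \<Rightarrow> real) \<Rightarrow> bool" where
  "ctmc_generator Q \<longleftrightarrow> (\<forall>x y. x \<noteq> y \<longrightarrow> Q x y \<ge> 0) \<and> (\<forall>x. (\<Sum>y\<in>UNIV. Q x y) = 0)"

definition ctmc_irreducible :: "('a::finite \<Rightarrow> 'a \<Rightarrow> real) \<Rightarrow> bool" where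
  "ctmc_irreducible Q \<longleftrightarrow> (\<forall>x y. (\<lambda>u v. u \<noteq> v \<and> Q u v > 0)\<^sup>*\<^sup>* x y)"

definition ctmc_stationary :: "('a::finite \<Rightarrow> 'a \<Rightarrow> real) \<Rightarrow> ('a \<Rightarrow> real) \<Rightarrow> bool" where
  "ctmc_stationary Q \<pi> \<longleftrightarrow> (\<forall>x. \<pi> x \<ge> 0) \<and> (\<Sum>x\<in>UNIV. \<pi> x) = 1 \<and>
     (\<forall>y. (\<Sum>x\<in>UNIV. \<pi> x * Q x y) = 0)"

definition ctmc_reversible :: "('a::finite \<Rightarrow> 'a \<Rightarrow> real) \<Rightarrow> ('a \<Rightarrow> real) \<Rightarrow> bool" where
  "ctmc_reversible Q \<pi> \<longleftrightarrow> (\<forall>x y. \<pi> x * Q x y = \<pi> y * Q y x)"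

definition hellinger_dist :: "('a::finite \<Rightarrow> 'a \<Rightarrow> real) \<Rightarrow> ('a \<Rightarrow> real) \<Rightarrow> real \<Rightarrow> real" where
  "hellinger_dist Q \<pi> t = Max (range (\<lambda>x.
     sqrt (\<Sum>y\<in>UNIV. (sqrt (ctmc_semigroup Q t x y) - sqrt (\<pi> y))^2)))"

end

theory Submission
  imports Defs "HOL-Analysis.Convex"
begin


lemma delta_mult[simp]: "(if x = z then (1::real) else 0) * a = (if x = z then a else 0)"
  "a * (if x = z then (1::real) else 0) = (if x = z then a else 0)" by auto

lemma mpow_bound:
  fixes Q :: "'a::finite \<Rightarrow> 'a \<Rightarrow> real"
  defines "C \<equiv> (\<Sum>x\<in>UNIV. \<Sum>z\<in>UNIV. \<bar>Q x z\<bar>) + 1"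
  shows "\<bar>ctmc_mpow Q n x y\<bar> \<le> C ^ n"
proof (induction n arbitrary: x y)
  case 0
  have "C \<ge> 0" unfolding C_def by (simp add: sum_nonneg add_nonneg_nonneg)
  then show ?case by simp
next
  case (Suc n)
  have rowb: "(\<Sum>z\<in>UNIV. \<bar>Q x z\<bar>) \<le> C"
  proof -
    have "(\<Sum>z\<in>UNIV. \<bar>Q x z\<bar>) \<le> (\<Sum>x\<in>UNIV. \<Sum>z\<in>UNIV. \<bar>Q x z\<bar>)"
      by (rule member_le_sum[where f="\<lambda>x. \<Sum>z\<in>UNIV. \<bar>Q x z\<bar>"]) (auto intro: sum_nonneg)
    then show ?thesis unfolding C_def by simp
  qed
  have "\<bar>ctmc_mpow Q (Suc n) x y\<bar> \<le> (\<Sum>z\<in>UNIV. \<bar>Q x z * ctmc_mpow Q n z y\<bar>)"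
    by (simp add: sum_abs)
  also have "\<dots> \<le> (\<Sum>z\<in>UNIV. \<bar>Q x z\<bar> * C ^ n)"
    by (rule sum_mono) (simp add: abs_mult Suc.IH mult_left_mono)
  also have "\<dots> = (\<Sum>z\<in>UNIV. \<bar>Q x z\<bar>) * C ^ n" by (simp add: sum_distrib_right)
  also have "\<dots> \<le> C * C ^ n"
    using rowb by (rule mult_right_mono) (unfold C_def, simp add: sum_nonneg add_nonneg_nonneg)
  finally show ?case by simp
qed

lemma mpow_summable:
  fixes Q :: "'a::finite \<Rightarrow> 'a \<Rightarrow> real"
  shows "summable (\<lambda>n. \<bar>t ^ n / fact n * ctmc_mpow Q n x y\<bar>)"
proof -
  define C where "C \<equiv> (\<Sum>x\<in>UNIV. \<Sum>z\<in>UNIV. \<bar>Q x z\<bar>) + 1"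
  have "summable (\<lambda>n. inverse (fact n) * (\<bar>t\<bar> * C) ^ n)" by (rule summable_exp)
  then show ?thesis
  proof (rule summable_comparison_test'[where N=0])
    fix n :: nat
    have "\<bar>ctmc_mpow Q n x y\<bar> \<le> C ^ n" unfolding C_def by (rule mpow_bound)
    then have "\<bar>t\<bar> ^ n / fact n * \<bar>ctmc_mpow Q n x y\<bar> \<le> \<bar>t\<bar> ^ n / fact n * C ^ n"
      by (rule mult_left_mono) simp
    then show "norm \<bar>t ^ n / fact n * ctmc_mpow Q n x y\<bar> \<le> inverse (fact n) * (\<bar>t\<bar> * C) ^ n"
      by (simp add: abs_mult power_abs power_mult_distrib field_simps)
  qed
qed

lemma mpow_summable':
  fixes Q :: "'a::finite \<Rightarrow> 'a \<Rightarrow> real"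
  shows "summable (\<lambda>n. t ^ n / fact n * ctmc_mpow Q n x y)"
  by (rule summable_rabs_cancel[OF mpow_summable])

lemma mpow_add:
  fixes Q :: "'a::finite \<Rightarrow> 'a \<Rightarrow> real"
  shows "ctmc_mpow Q (m + n) x y = (\<Sum>z\<in>UNIV. ctmc_mpow Q m x z * ctmc_mpow Q n z y)"
proof (induction m arbitrary: x)
  case 0
  then show ?case by simp
next
  case (Suc m)
  have "ctmc_mpow Q (Suc m + n) x y = (\<Sum>w\<in>UNIV. Q x w * (\<Sum>z\<in>UNIV. ctmc_mpow Q m w z * ctmc_mpow Q n z y))"
    by (simp add: Suc.IH)
  also have "\<dots> = (\<Sum>z\<in>UNIV. (\<Sum>w\<in>UNIV. Q x w * ctmc_mpow Q m w z) * ctmc_mpow Q n z y)"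
    by (simp add: sum_distrib_left sum_distrib_right mult.assoc) (rule sum.swap)
  finally show ?case by simp
qed

lemma mpow_one: "ctmc_mpow Q 1 x y = Q x y"
  by simp

lemma mpow_Suc_right:
  fixes Q :: "'a::finite \<Rightarrow> 'a \<Rightarrow> real"
  shows "ctmc_mpow Q (Suc n) x y = (\<Sum>z\<in>UNIV. ctmc_mpow Q n x z * Q z y)"
  using mpow_add[of Q n 1 x y] by (simp add: mpow_one)

lemma mpow_rowsum:
  fixes Q :: "'a::finite \<Rightarrow> 'a \<Rightarrow> real"
  assumes "ctmc_generator Q"
  shows "(\<Sum>y\<in>UNIV. ctmc_mpow Q n x y) = (if n = 0 then 1 else 0)"
proof (cases n)
  case 0 then show ?thesis by simp
next
  case (Suc m)
  have "(\<Sum>y\<in>UNIV. ctmc_mpow Q (Suc m) x y) = (\<Sum>y\<in>UNIV. \<Sum>z\<in>UNIV. ctmc_mpow Q m x z * Q z y)"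
    by (simp only: mpow_Suc_right)
  also have "\<dots> = (\<Sum>z\<in>UNIV. ctmc_mpow Q m x z * (\<Sum>y\<in>UNIV. Q z y))"
    by (simp add: sum_distrib_left) (rule sum.swap)
  also have "\<dots> = 0" using assms by (simp add: ctmc_generator_def)
  finally show ?thesis using Suc by simp
qed

lemma mpow_rev:
  fixes Q :: "'a::finite \<Rightarrow> 'a \<Rightarrow> real"
  assumes "ctmc_reversible Q \<pi>"
  shows "\<pi> x * ctmc_mpow Q n x y = \<pi> y * ctmc_mpow Q n y x"
proof (induction n arbitrary: y)
  case 0 then show ?case by simp
next
  case (Suc n)
  have "\<pi> x * ctmc_mpow Q (Suc n) x y = (\<Sum>z\<in>UNIV. (\<pi> x * ctmc_mpow Q n x z) * Q z y)"
    by (simp only: mpow_Suc_right sum_distrib_left mult.assoc)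
  also have "\<dots> = (\<Sum>z\<in>UNIV. ctmc_mpow Q n z x * (\<pi> z * Q z y))"
    by (rule sum.cong[OF refl], subst Suc.IH, simp add: algebra_simps)
  also have "\<dots> = (\<Sum>z\<in>UNIV. ctmc_mpow Q n z x * (\<pi> y * Q y z))"
    using assms by (simp add: ctmc_reversible_def)
  also have "\<dots> = \<pi> y * ctmc_mpow Q (Suc n) y x"
    by (simp add: sum_distrib_left mult.commute mult.left_commute)
  finally show ?case .
qed



lemma binom_seq:
  fixes f :: "nat \<Rightarrow> real"
  shows "(\<Sum>k\<le>n. of_nat (n choose k) * c^(n-k) * f (Suc k)) + c * (\<Sum>k\<le>n. of_nat (n choose k) * c^(n-k) * f k)
       = (\<Sum>k\<le>Suc n. of_nat (Suc n choose k) * c^(Suc n - k) * f k)"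
proof -
  define h where "h k = of_nat (n choose k) * c^(Suc n - k) * f k" for k
  have A: "c * (\<Sum>k\<le>n. of_nat (n choose k) * c^(n-k) * f k) = (\<Sum>k\<le>Suc n. h k)"
    by (simp add: h_def sum_distrib_left Suc_diff_le algebra_simps)
  have B: "(\<Sum>k\<le>Suc n. h k) = c^(Suc n) * f 0 + (\<Sum>k\<le>n. of_nat (n choose Suc k) * c^(n-k) * f (Suc k))"
    by (subst sum.atMost_Suc_shift) (simp add: h_def)
  have C: "(\<Sum>k\<le>Suc n. of_nat (Suc n choose k) * c^(Suc n - k) * f k)
     = c^(Suc n) * f 0 + (\<Sum>k\<le>n. (of_nat (n choose k) + of_nat (n choose Suc k)) * c^(n-k) * f (Suc k))"
    by (subst sum.atMost_Suc_shift) simp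
  show ?thesis unfolding A B C by (simp add: algebra_simps sum.distrib)
qed

lemma mpow_shift:
  fixes R :: "'a::finite \<Rightarrow> 'a \<Rightarrow> real"
  shows "ctmc_mpow (\<lambda>x y. R x y + c * (if x = y then 1 else 0)) k x y
       = (\<Sum>i\<le>k. of_nat (k choose i) * c^(k-i) * ctmc_mpow R i x y)"
proof (induction k arbitrary: x)
  case 0 then show ?case by simp
next
  case (Suc k)
  define S where "S = (\<lambda>x y. R x y + c * (if x = y then 1 else 0))"
  have "ctmc_mpow S (Suc k) x y = (\<Sum>z\<in>UNIV. (R x z + c * (if x = z then 1 else 0)) * ctmc_mpow S k z y)"
    by (simp only: ctmc_mpow.simps S_def)
  also have "\<dots> = (\<Sum>z\<in>UNIV. R x z * ctmc_mpow S k z y) + c * ctmc_mpow S k x y"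
    by (simp add: distrib_right sum.distrib mult.assoc if_distrib[where f="\<lambda>u. u * _"] cong: if_cong)
  also have "\<dots> = (\<Sum>z\<in>UNIV. R x z * (\<Sum>i\<le>k. of_nat (k choose i) * c^(k-i) * ctmc_mpow R i z y))
       + c * (\<Sum>i\<le>k. of_nat (k choose i) * c^(k-i) * ctmc_mpow R i x y)"
    unfolding S_def Suc.IH ..
  also have "(\<Sum>z\<in>UNIV. R x z * (\<Sum>i\<le>k. of_nat (k choose i) * c^(k-i) * ctmc_mpow R i z y))
     = (\<Sum>i\<le>k. of_nat (k choose i) * c^(k-i) * ctmc_mpow R (Suc i) x y)"
    by (simp add: sum_distrib_left sum_distrib_right algebra_simps) (rule sum.swap)
  finally show ?case unfolding S_def using binom_seq[of k c "\<lambda>i. ctmc_mpow R i x y"] by simp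
qed



lemma P_rowsum:
  fixes Q :: "'a::finite \<Rightarrow> 'a \<Rightarrow> real"
  assumes "ctmc_generator Q"
  shows "(\<Sum>y\<in>UNIV. ctmc_semigroup Q t x y) = 1"
proof -
  have "(\<Sum>y\<in>UNIV. ctmc_semigroup Q t x y) = (\<Sum>n. \<Sum>y\<in>UNIV. t ^ n / fact n * ctmc_mpow Q n x y)"
    unfolding ctmc_semigroup_def by (rule suminf_sum[symmetric]) (rule mpow_summable')
  also have "\<dots> = (\<Sum>n. if n = 0 then 1 else 0)"
    by (simp only: sum_distrib_left[symmetric] mpow_rowsum[OF assms]) (rule arg_cong[where f=suminf], auto)
  also have "\<dots> = 1"
    using sums_single[of 0 "\<lambda>_. 1::real"] by (simp add: sums_iff)
  finally show ?thesis .
qed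

lemma P_rev:
  fixes Q :: "'a::finite \<Rightarrow> 'a \<Rightarrow> real"
  assumes "ctmc_reversible Q \<pi>"
  shows "\<pi> x * ctmc_semigroup Q t x y = \<pi> y * ctmc_semigroup Q t y x"
proof -
  have "\<pi> x * ctmc_semigroup Q t x y = (\<Sum>n. t ^ n / fact n * (\<pi> x * ctmc_mpow Q n x y))"
    unfolding ctmc_semigroup_def
    by (subst suminf_mult[OF mpow_summable', symmetric]) (simp add: algebra_simps)
  also have "\<dots> = (\<Sum>n. t ^ n / fact n * (\<pi> y * ctmc_mpow Q n y x))"
    by (simp add: mpow_rev[OF assms])
  also have "\<dots> = \<pi> y * ctmc_semigroup Q t y x"
    unfolding ctmc_semigroup_def
    by (subst suminf_mult[OF mpow_summable', symmetric]) (simp add: algebra_simps)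
  finally show ?thesis .
qed

lemma exp_conv_real: "(t + t) ^ k / fact k = (\<Sum>i\<le>k. t ^ i / fact i * (t ^ (k - i) / fact (k - i)))"
  for t :: real
  using exp_series_add_commuting[of t t k] by (simp add: divide_inverse mult.commute)

lemma P_double:
  fixes Q :: "'a::finite \<Rightarrow> 'a \<Rightarrow> real"
  shows "ctmc_semigroup Q (2 * t) x y = (\<Sum>z\<in>UNIV. ctmc_semigroup Q t x z * ctmc_semigroup Q t z y)"
proof -
  define a where "a x y n = t ^ n / fact n * ctmc_mpow Q n x y" for x y n
  have "(\<Sum>z\<in>UNIV. ctmc_semigroup Q t x z * ctmc_semigroup Q t z y)
      = (\<Sum>z\<in>UNIV. \<Sum>k. \<Sum>i\<le>k. a x z i * a z y (k - i))"
    unfolding ctmc_semigroup_def a_def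
    by (rule sum.cong[OF refl], rule Cauchy_product) (simp_all only: real_norm_def mpow_summable)
  also have "\<dots> = (\<Sum>k. \<Sum>z\<in>UNIV. \<Sum>i\<le>k. a x z i * a z y (k - i))"
    by (rule suminf_sum[symmetric], unfold a_def, rule summable_Cauchy_product) (simp_all only: real_norm_def mpow_summable)
  also have "\<dots> = (\<Sum>k. (2 * t) ^ k / fact k * ctmc_mpow Q k x y)"
  proof (rule arg_cong[where f=suminf], rule ext)
    fix k
    have "(\<Sum>z\<in>UNIV. \<Sum>i\<le>k. a x z i * a z y (k - i))
        = (\<Sum>i\<le>k. t ^ i / fact i * (t ^ (k - i) / fact (k - i)) * (\<Sum>z\<in>UNIV. ctmc_mpow Q i x z * ctmc_mpow Q (k - i) z y))"
          proof (subst sum.swap, rule sum.cong[OF refl])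
      fix i assume "i \<in> {..k}"
      have "\<And>z. a x z i * a z y (k - i) = t ^ i / fact i * (t ^ (k - i) / fact (k - i)) * (ctmc_mpow Q i x z * ctmc_mpow Q (k - i) z y)"
        unfolding a_def by (simp only: mult_ac)
      then show "(\<Sum>z\<in>UNIV. a x z i * a z y (k - i)) = t ^ i / fact i * (t ^ (k - i) / fact (k - i)) * (\<Sum>z\<in>UNIV. ctmc_mpow Q i x z * ctmc_mpow Q (k - i) z y)"
        by (simp only: sum_distrib_left)
    qed
    also have "\<dots> = (\<Sum>i\<le>k. t ^ i / fact i * (t ^ (k - i) / fact (k - i)) * ctmc_mpow Q k x y)"
    proof (rule sum.cong[OF refl])
      fix i assume "i \<in> {..k}"
      then have ik: "i + (k - i) = k" by simp
      have "ctmc_mpow Q (i + (k - i)) x y = (\<Sum>z\<in>UNIV. ctmc_mpow Q i x z * ctmc_mpow Q (k - i) z y)"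
        by (rule mpow_add)
      then show "t ^ i / fact i * (t ^ (k - i) / fact (k - i)) * (\<Sum>z\<in>UNIV. ctmc_mpow Q i x z * ctmc_mpow Q (k - i) z y)
          = t ^ i / fact i * (t ^ (k - i) / fact (k - i)) * ctmc_mpow Q k x y"
        unfolding ik by (rule arg_cong[where f="\<lambda>u. _ * u", OF sym])
    qed
    also have "\<dots> = (2 * t) ^ k / fact k * ctmc_mpow Q k x y"
      by (simp only: sum_distrib_right[symmetric] exp_conv_real[symmetric] mult_2)
    finally show "(\<Sum>z\<in>UNIV. \<Sum>i\<le>k. a x z i * a z y (k - i)) = (2 * t) ^ k / fact k * ctmc_mpow Q k x y" .
  qed
  finally have X: "(\<Sum>z\<in>UNIV. ctmc_semigroup Q t x z * ctmc_semigroup Q t z y) = (\<Sum>k. (2 * t) ^ k / fact k * ctmc_mpow Q k x y)" .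
  show ?thesis unfolding ctmc_semigroup_def[of Q "2 * t" x y] using X by (rule sym)
qed



lemma mpow_nonneg:
  fixes R :: "'a::finite \<Rightarrow> 'a \<Rightarrow> real"
  assumes "\<And>x y. R x y \<ge> 0"
  shows "ctmc_mpow R n x y \<ge> 0"
  by (induction n arbitrary: x) (auto intro!: sum_nonneg mult_nonneg_nonneg assms)

lemma term_ident:
  fixes t c r :: real
  assumes "i \<le> n"
  shows "t ^ n / fact n * (of_nat (n choose i) * (-c) ^ (n - i) * r)
       = t ^ i / fact i * r * ((- c * t) ^ (n - i) / fact (n - i))"
proof -
  have "t ^ n = t ^ i * t ^ (n - i)" using assms by (simp flip: power_add)
  then show ?thesis
    by (simp add: binomial_fact[OF assms] power_mult_distrib field_simps power_minus[of "c*t"] power_minus[of c])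
qed

lemma exp_sums_real: "(\<lambda>n. x ^ n / fact n) sums exp (x::real)"
  using exp_converges[of x] by (simp add: divide_inverse mult.commute)

lemma P_nonneg:
  fixes Q :: "'a::finite \<Rightarrow> 'a \<Rightarrow> real"
  assumes gen: "ctmc_generator Q" and t: "t \<ge> 0"
  shows "ctmc_semigroup Q t x y \<ge> 0"
proof -
  define c where "c = (\<Sum>x\<in>UNIV. \<bar>Q x x\<bar>)"
  define R where "R = (\<lambda>x y. Q x y + c * (if x = y then 1 else 0))"
  have cb: "\<bar>Q x x\<bar> \<le> c" for x
    unfolding c_def by (rule member_le_sum[where f="\<lambda>x. \<bar>Q x x\<bar>"]) auto
  have Rnn: "R x y \<ge> 0" for x y
  proof (cases "x = y")
    case True then show ?thesis using cb[of x] by (simp add: R_def)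
  next
    case False then show ?thesis using gen by (simp add: R_def ctmc_generator_def)
  qed
  have QR: "Q = (\<lambda>x y. R x y + (-c) * (if x = y then 1 else 0))"
    by (rule ext, rule ext) (simp add: R_def)
  have mQ: "ctmc_mpow Q n x y = (\<Sum>i\<le>n. of_nat (n choose i) * (-c)^(n-i) * ctmc_mpow R i x y)" for n
    by (subst QR, rule mpow_shift)
  define a where "a i = t ^ i / fact i * ctmc_mpow R i x y" for i
  define b where "b j = (- c * t) ^ j / fact j" for j
  have sa: "summable (\<lambda>k. norm (a k))" unfolding a_def real_norm_def by (rule mpow_summable)
  have sb: "summable (\<lambda>k. norm (b k))"
  proof -
    have "summable (\<lambda>n. inverse (fact n) * \<bar>- c * t\<bar> ^ n)" by (rule summable_exp)
    then show ?thesis unfolding b_def by (simp add: power_abs divide_inverse mult.commute abs_mult)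
  qed
  have "ctmc_semigroup Q t x y = (\<Sum>n. \<Sum>i\<le>n. a i * b (n - i))"
    unfolding ctmc_semigroup_def mQ
    by (rule arg_cong[where f=suminf], rule ext, simp only: sum_distrib_left, rule sum.cong[OF refl])
       (unfold a_def b_def, rule term_ident, simp)
  also have "\<dots> = (\<Sum>n. a n) * (\<Sum>n. b n)"
    by (rule Cauchy_product[OF sa sb, symmetric])
  also have "(\<Sum>n. b n) = exp (- c * t)"
    unfolding b_def by (rule sums_unique[symmetric], rule exp_sums_real)
  also have "(\<Sum>n. a n) \<ge> 0"
    unfolding a_def
    by (rule suminf_nonneg[OF mpow_summable'])
       (simp add: t mpow_nonneg[OF Rnn])
  then have "(\<Sum>n. a n) * exp (- c * t) \<ge> 0" by simp
  finally show ?thesis by simp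
qed



lemma wcs:
  fixes w f g :: "'a::finite \<Rightarrow> real"
  assumes "\<And>z. w z \<ge> 0"
  shows "(\<Sum>z\<in>UNIV. w z * f z * g z)^2 \<le> (\<Sum>z\<in>UNIV. w z * (f z)^2) * (\<Sum>z\<in>UNIV. w z * (g z)^2)"
proof -
  have "(\<Sum>z\<in>UNIV. (sqrt (w z) * f z) * (sqrt (w z) * g z))^2
        \<le> (\<Sum>z\<in>UNIV. (sqrt (w z) * f z)^2) * (\<Sum>z\<in>UNIV. (sqrt (w z) * g z)^2)"
    by (rule Cauchy_Schwarz_ineq_sum)
  moreover have "\<And>z. (sqrt (w z) * f z) * (sqrt (w z) * g z) = w z * f z * g z"
    using assms by (simp add: algebra_simps real_sqrt_mult_self)
  moreover have "\<And>h z. (sqrt (w z) * h z)^2 = w z * (h z)^2"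
    using assms by (simp add: power_mult_distrib)
  ultimately show ?thesis by simp
qed

lemma wabs:
  fixes w f :: "'a::finite \<Rightarrow> real"
  assumes "\<And>z. w z \<ge> 0" "(\<Sum>z\<in>UNIV. w z) = 1" "(\<Sum>z\<in>UNIV. w z * (f z)^2) \<le> d^2" "d \<ge> 0"
  shows "(\<Sum>z\<in>UNIV. w z * \<bar>f z\<bar>) \<le> d"
proof -
  have "(\<Sum>z\<in>UNIV. w z * \<bar>f z\<bar> * 1)^2 \<le> (\<Sum>z\<in>UNIV. w z * \<bar>f z\<bar>^2) * (\<Sum>z\<in>UNIV. w z * 1^2)"
    by (rule wcs) (rule assms)
  then have "(\<Sum>z\<in>UNIV. w z * \<bar>f z\<bar>)^2 \<le> d^2" using assms(2,3) by simp
  then show ?thesis using assms(4) by (rule power2_le_imp_le)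
qed

lemma sqrt_diff_sq:
  assumes "u \<ge> 0" "v \<ge> 0"
  shows "(sqrt u - sqrt v)^2 \<le> \<bar>u - v\<bar>"
proof -
  have "\<bar>sqrt u - sqrt v\<bar> \<le> sqrt u + sqrt v"
    using real_sqrt_ge_zero[OF assms(1)] real_sqrt_ge_zero[OF assms(2)] by linarith
  then have "\<bar>sqrt u - sqrt v\<bar> * \<bar>sqrt u - sqrt v\<bar> \<le> \<bar>sqrt u - sqrt v\<bar> * (sqrt u + sqrt v)"
    by (rule mult_left_mono) simp
  also have "\<dots> = \<bar>(sqrt u - sqrt v) * (sqrt u + sqrt v)\<bar>"
    using real_sqrt_ge_zero[OF assms(1)] real_sqrt_ge_zero[OF assms(2)] by (simp add: abs_mult)
  also have "(sqrt u - sqrt v) * (sqrt u + sqrt v) = u - v"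
    using assms by (simp add: algebra_simps)
  finally show ?thesis by (simp add: power2_eq_square)
qed

lemma sqrt_one_diff:
  assumes "v \<ge> (0::real)"
  shows "\<bar>sqrt v - 1\<bar> \<le> \<bar>v - 1\<bar>"
proof -
  have "(sqrt v - 1) * (sqrt v + 1) = v - 1" using assms by (simp add: algebra_simps)
  then have "\<bar>sqrt v - 1\<bar> * (sqrt v + 1) = \<bar>v - 1\<bar>"
    by (metis abs_mult abs_of_nonneg add_nonneg_nonneg real_sqrt_ge_zero zero_le_one assms)
  moreover have "\<bar>sqrt v - 1\<bar> \<le> \<bar>sqrt v - 1\<bar> * (sqrt v + 1)"
    using assms by (simp add: mult_le_cancel_left1 )
  ultimately show ?thesis by simp
qed

lemma sq_bound:
  fixes u b :: real
  assumes "u \<ge> 0"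
  shows "(sqrt u - 1)^2 \<le> 2 * (u - 1 - b)^2 + 2 * \<bar>b\<bar>"
proof (cases "\<bar>u - 1 - b\<bar> \<ge> 1/2")
  case True
  have "(sqrt u - 1)^2 \<le> \<bar>u - 1\<bar>" using sqrt_diff_sq[OF assms, of 1] by simp
  also have "\<dots> \<le> \<bar>u - 1 - b\<bar> + \<bar>b\<bar>" by simp
  also have "\<bar>u - 1 - b\<bar> \<le> 2 * (u - 1 - b)^2"
  proof -
    have "\<bar>u - 1 - b\<bar> * 1 \<le> \<bar>u - 1 - b\<bar> * (2 * \<bar>u - 1 - b\<bar>)"
      using True by (intro mult_left_mono) auto
    then show ?thesis by (simp add: power2_eq_square)
  qed
  finally show ?thesis by simp
next
  case False
  define v where "v = u - b"
  have v0: "v \<ge> 0" using False unfolding v_def by (auto simp: abs_if split: if_splits)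
  have p: "(sqrt u - sqrt v)^2 \<le> \<bar>b\<bar>" using sqrt_diff_sq[OF assms v0] by (simp add: v_def)
  have q: "(sqrt v - 1)^2 \<le> (u - 1 - b)^2"
    using sqrt_one_diff[OF v0] by (simp add: v_def abs_le_square_iff algebra_simps)
  have "(sqrt u - 1)^2 = ((sqrt u - sqrt v) + (sqrt v - 1))^2" by simp
  also have "\<dots> \<le> 2 * (sqrt u - sqrt v)^2 + 2 * (sqrt v - 1)^2"
    by (smt (verit) zero_le_power2 power2_diff power2_sum)
  finally show ?thesis using p q by simp
qed

lemma sqrt_ratio:
  fixes p q :: real
  assumes "p \<ge> 0" "q > 0"
  shows "q * (sqrt (p / q) - 1)^2 = (sqrt p - sqrt q)^2"
proof -
  have sq: "sqrt q > 0" using assms by simp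
  have "q = (sqrt q)^2" using assms by simp
  then have "q * (sqrt (p / q) - 1)^2 = (sqrt q)^2 * (sqrt p / sqrt q - 1)^2"
    by (simp add: real_sqrt_divide)
  also have "\<dots> = (sqrt q * (sqrt p / sqrt q - 1))^2" by (simp add: power_mult_distrib)
  also have "sqrt q * (sqrt p / sqrt q - 1) = sqrt p - sqrt q" using sq by (simp add: field_simps)
  finally show ?thesis .
qed



lemma core:
  fixes P P2 :: "'a::finite \<Rightarrow> 'a \<Rightarrow> real" and \<pi> :: "'a \<Rightarrow> real" and d :: real
  assumes pos: "\<And>x. \<pi> x > 0" and psum: "(\<Sum>x\<in>UNIV. \<pi> x) = 1"
    and Pnn: "\<And>x y. P x y \<ge> 0" and rows: "\<And>x. (\<Sum>y\<in>UNIV. P x y) = 1"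
    and rev: "\<And>x y. \<pi> x * P x y = \<pi> y * P y x"
    and P2: "\<And>x y. P2 x y = (\<Sum>z\<in>UNIV. P x z * P z y)"
    and dx: "\<And>x. (\<Sum>y\<in>UNIV. (sqrt (P x y) - sqrt (\<pi> y))^2) \<le> d^2" and d0: "d \<ge> 0"
  shows "(\<Sum>y\<in>UNIV. (sqrt (P2 x y) - sqrt (\<pi> y))^2) \<le> 34 * d^4 + 8 * d^3"
proof -
  define g where "g x z = sqrt (P x z / \<pi> z) - 1" for x z
  have pnn: "\<pi> z \<ge> 0" for z using pos[of z] by simp
  have F1: "\<pi> z * (g x z)^2 = (sqrt (P x z) - sqrt (\<pi> z))^2" for x z
    unfolding g_def by (rule sqrt_ratio[OF Pnn pos])
  have G1: "(\<Sum>z\<in>UNIV. \<pi> z * (g x z)^2) \<le> d^2" for x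
    using dx[of x] by (simp add: F1)
  have symm: "P y z / \<pi> z = P z y / \<pi> y" for y z
    using rev[of y z] pos[of y] pos[of z] by (simp add: field_simps)
  have F2: "\<pi> y * (g y z)^2 = (sqrt (P z y) - sqrt (\<pi> y))^2" for y z
    unfolding g_def symm[of y z] by (rule sqrt_ratio[OF Pnn pos])
  have G2: "(\<Sum>y\<in>UNIV. \<pi> y * (g y z)^2) \<le> d^2" for z
    using dx[of z] by (simp add: F2)
  have hx: "P x z / \<pi> z = (1 + g x z)^2" for x z
    unfolding g_def using Pnn[of x z] pos[of z] by simp
  have H1: "(\<Sum>z\<in>UNIV. \<pi> z * (2 * g x z + (g x z)^2)) = 0" for x
  proof -
    have "(\<Sum>z\<in>UNIV. \<pi> z * (1 + g x z)^2) = (\<Sum>z\<in>UNIV. P x z)"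
      by (rule sum.cong[OF refl]) (simp add: hx[symmetric] pos less_imp_neq[OF pos, symmetric])
    then have "(\<Sum>z\<in>UNIV. \<pi> z + \<pi> z * (2 * g x z + (g x z)^2)) = 1"
      by (simp add: rows power2_eq_square algebra_simps)
    then show ?thesis by (simp add: sum.distrib psum)
  qed
  define a where "a y = 4 * (\<Sum>z\<in>UNIV. \<pi> z * g x z * g y z)" for y
  define b where "b y = (\<Sum>z\<in>UNIV. \<pi> z * (2 * g x z * (g y z)^2 + 2 * (g x z)^2 * g y z + (g x z)^2 * (g y z)^2))" for y
  have E2: "P2 x y / \<pi> y = 1 + a y + b y" for y
  proof -
    have "P2 x y / \<pi> y = (\<Sum>z\<in>UNIV. P x z * (P z y / \<pi> y))"
      unfolding P2 sum_divide_distrib by (simp only: times_divide_eq_right)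
    also have "\<dots> = (\<Sum>z\<in>UNIV. \<pi> z * ((P x z / \<pi> z) * (P y z / \<pi> z)))"
    proof (rule sum.cong[OF refl])
      fix z
      have "\<pi> z \<noteq> 0" using pos[of z] by simp
      then show "P x z * (P z y / \<pi> y) = \<pi> z * ((P x z / \<pi> z) * (P y z / \<pi> z))"
        unfolding symm[of y z] by (simp add: field_simps)
    qed
    also have "\<dots> = (\<Sum>z\<in>UNIV. \<pi> z + \<pi> z * (2 * g x z + (g x z)^2) + \<pi> z * (2 * g y z + (g y z)^2)
         + \<pi> z * (2 * g x z + (g x z)^2) * (2 * g y z + (g y z)^2))"
      by (rule sum.cong[OF refl]) (simp add: hx power2_eq_square algebra_simps)
    also have "\<dots> = 1 + (\<Sum>z\<in>UNIV. \<pi> z * (2 * g x z + (g x z)^2) * (2 * g y z + (g y z)^2))"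
      by (simp add: sum.distrib psum H1)
    also have "(\<Sum>z\<in>UNIV. \<pi> z * (2 * g x z + (g x z)^2) * (2 * g y z + (g y z)^2)) = a y + b y"
      unfolding a_def b_def by (simp add: sum_distrib_left sum.distrib[symmetric] power2_eq_square algebra_simps)
    finally show ?thesis by simp
  qed
  have pt: "(sqrt (P2 x y) - sqrt (\<pi> y))^2 \<le> \<pi> y * (2 * (a y)^2 + 2 * \<bar>b y\<bar>)" for y
  proof -
    have P2nn: "P2 x y \<ge> 0" by (simp add: P2 sum_nonneg Pnn)
    have "(sqrt (P2 x y) - sqrt (\<pi> y))^2 = \<pi> y * (sqrt (P2 x y / \<pi> y) - 1)^2"
      by (rule sqrt_ratio[OF P2nn pos, symmetric])
    also have "\<dots> \<le> \<pi> y * (2 * (P2 x y / \<pi> y - 1 - b y)^2 + 2 * \<bar>b y\<bar>)"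
      by (rule mult_left_mono[OF sq_bound pnn]) (simp add: P2nn pnn)
    also have "P2 x y / \<pi> y - 1 - b y = a y" by (simp add: E2)
    finally show ?thesis .
  qed
  have Sa: "(\<Sum>y\<in>UNIV. \<pi> y * (a y)^2) \<le> 16 * d^4"
  proof -
    have "\<pi> y * (a y)^2 \<le> \<pi> y * (16 * d^2 * (\<Sum>z\<in>UNIV. \<pi> z * (g y z)^2))" for y
    proof -
      have "(a y)^2 = 16 * (\<Sum>z\<in>UNIV. \<pi> z * g x z * g y z)^2" by (simp add: a_def power_mult_distrib)
      also have "\<dots> \<le> 16 * ((\<Sum>z\<in>UNIV. \<pi> z * (g x z)^2) * (\<Sum>z\<in>UNIV. \<pi> z * (g y z)^2))"
        using wcs[OF pnn] by simp
      also have "\<dots> \<le> 16 * (d^2 * (\<Sum>z\<in>UNIV. \<pi> z * (g y z)^2))"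
        using G1[of x] by (intro mult_left_mono mult_right_mono) (auto intro!: sum_nonneg simp: pnn)
      finally show ?thesis by (intro mult_left_mono pnn) simp
    qed
    then have "(\<Sum>y\<in>UNIV. \<pi> y * (a y)^2) \<le> (\<Sum>y\<in>UNIV. \<pi> y * (16 * d^2 * (\<Sum>z\<in>UNIV. \<pi> z * (g y z)^2)))"
      by (rule sum_mono)
    also have "\<dots> = 16 * d^2 * (\<Sum>z\<in>UNIV. \<pi> z * (\<Sum>y\<in>UNIV. \<pi> y * (g y z)^2))"
      by (simp add: sum_distrib_left algebra_simps) (subst sum.swap, simp add: mult_ac)
    also have "\<dots> \<le> 16 * d^2 * (\<Sum>z\<in>UNIV. \<pi> z * d^2)"
      by (intro mult_left_mono sum_mono) (auto simp: G2 pnn)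
    also have "\<dots> = 16 * d^4" by (simp add: sum_distrib_right[symmetric] psum power4_eq_xxxx power2_eq_square)
    finally show ?thesis .
  qed
  have Sb: "(\<Sum>y\<in>UNIV. \<pi> y * \<bar>b y\<bar>) \<le> 4 * d^3 + d^4"
  proof -
    define T where "T y z = 2 * \<bar>g x z\<bar> * (g y z)^2 + 2 * (g x z)^2 * \<bar>g y z\<bar> + (g x z)^2 * (g y z)^2" for y z
    have "\<bar>b y\<bar> \<le> (\<Sum>z\<in>UNIV. \<pi> z * T y z)" for y
    proof -
      have "\<bar>b y\<bar> \<le> (\<Sum>z\<in>UNIV. \<bar>\<pi> z * (2 * g x z * (g y z)^2 + 2 * (g x z)^2 * g y z + (g x z)^2 * (g y z)^2)\<bar>)"
        unfolding b_def by (rule sum_abs)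
      also have "\<dots> \<le> (\<Sum>z\<in>UNIV. \<pi> z * T y z)"
      proof (rule sum_mono)
        fix z
        have "\<bar>2 * g x z * (g y z)^2 + 2 * (g x z)^2 * g y z + (g x z)^2 * (g y z)^2\<bar> \<le> T y z"
          unfolding T_def by (rule order_trans[OF abs_triangle_ineq] add_mono order_trans[OF abs_triangle_ineq])+
             (simp_all add: abs_mult)
        then show "\<bar>\<pi> z * (2 * g x z * (g y z)^2 + 2 * (g x z)^2 * g y z + (g x z)^2 * (g y z)^2)\<bar> \<le> \<pi> z * T y z"
          by (simp add: abs_mult abs_of_nonneg pnn mult_left_mono)
      qed
      finally show ?thesis .
    qed
    then have "(\<Sum>y\<in>UNIV. \<pi> y * \<bar>b y\<bar>) \<le> (\<Sum>y\<in>UNIV. \<pi> y * (\<Sum>z\<in>UNIV. \<pi> z * T y z))"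
      by (intro sum_mono mult_left_mono pnn)
    also have "\<dots> = (\<Sum>z\<in>UNIV. \<pi> z * (\<Sum>y\<in>UNIV. \<pi> y * T y z))"
      by (simp add: sum_distrib_left mult_ac) (subst sum.swap, simp add: mult_ac)
    also have "\<dots> = (\<Sum>z\<in>UNIV. \<pi> z * (2 * \<bar>g x z\<bar> * (\<Sum>y\<in>UNIV. \<pi> y * (g y z)^2)
         + 2 * (g x z)^2 * (\<Sum>y\<in>UNIV. \<pi> y * \<bar>g y z\<bar>) + (g x z)^2 * (\<Sum>y\<in>UNIV. \<pi> y * (g y z)^2)))"
      unfolding T_def by (rule sum.cong[OF refl]) (simp add: sum_distrib_left sum.distrib algebra_simps)
    also have "\<dots> \<le> (\<Sum>z\<in>UNIV. \<pi> z * (2 * \<bar>g x z\<bar> * d^2 + 2 * (g x z)^2 * d + (g x z)^2 * d^2))"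
    proof (rule sum_mono, rule mult_left_mono[OF _ pnn], intro add_mono mult_left_mono)
      fix z
      show "(\<Sum>y\<in>UNIV. \<pi> y * (g y z)^2) \<le> d^2" by (rule G2)
      show "(\<Sum>y\<in>UNIV. \<pi> y * (g y z)^2) \<le> d^2" by (rule G2)
      show "(\<Sum>y\<in>UNIV. \<pi> y * \<bar>g y z\<bar>) \<le> d" by (rule wabs[OF pnn psum G2 d0])
    qed simp_all
    also have "\<dots> = 2 * d^2 * (\<Sum>z\<in>UNIV. \<pi> z * \<bar>g x z\<bar>) + (2 * d + d^2) * (\<Sum>z\<in>UNIV. \<pi> z * (g x z)^2)"
      by (simp add: sum_distrib_left sum.distrib algebra_simps)
    also have "\<dots> \<le> 2 * d^2 * d + (2 * d + d^2) * d^2"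
      by (intro add_mono mult_left_mono wabs[OF pnn psum G1 d0] G1) (simp_all add: d0)
    also have "\<dots> = 4 * d^3 + d^4" by (simp add: power2_eq_square power3_eq_cube power4_eq_xxxx algebra_simps)
    finally show ?thesis .
  qed
  have "(\<Sum>y\<in>UNIV. (sqrt (P2 x y) - sqrt (\<pi> y))^2) \<le> (\<Sum>y\<in>UNIV. \<pi> y * (2 * (a y)^2 + 2 * \<bar>b y\<bar>))"
    by (rule sum_mono) (rule pt)
  also have "\<dots> = 2 * (\<Sum>y\<in>UNIV. \<pi> y * (a y)^2) + 2 * (\<Sum>y\<in>UNIV. \<pi> y * \<bar>b y\<bar>)"
    by (simp add: sum_distrib_left sum.distrib algebra_simps)
  also have "\<dots> \<le> 2 * (16 * d^4) + 2 * (4 * d^3 + d^4)"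
    using Sa Sb by (intro add_mono mult_left_mono) simp_all
  finally show ?thesis by simp
qed



lemma pi_pos:
  fixes Q :: "'a::finite \<Rightarrow> 'a \<Rightarrow> real"
  assumes gen: "ctmc_generator Q" and irr: "ctmc_irreducible Q" and st: "ctmc_stationary Q \<pi>"
  shows "\<pi> y > 0"
proof (rule ccontr)
  assume "\<not> \<pi> y > 0"
  moreover have nn: "\<And>x. \<pi> x \<ge> 0" using st by (simp add: ctmc_stationary_def)
  ultimately have py: "\<pi> y = 0" using nn[of y] by linarith
  have zero: "\<pi> u = 0" if "(\<lambda>u v. u \<noteq> v \<and> Q u v > 0)\<^sup>*\<^sup>* u y" for u
    using that
  proof (induction rule: converse_rtranclp_induct)
    case base then show ?case by (rule py)
  next
    case (step u v)
    then have uv: "u \<noteq> v" "Q u v > 0" and pv: "\<pi> v = 0" by auto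
    have S: "(\<Sum>x\<in>UNIV. \<pi> x * Q x v) = 0" using st by (simp add: ctmc_stationary_def)
    have tn: "\<pi> x * Q x v \<ge> 0" for x
    proof (cases "x = v")
      case True then show ?thesis using pv by simp
    next
      case False then show ?thesis using gen nn[of x] by (simp add: ctmc_generator_def)
    qed
    have "\<pi> u * Q u v = 0"
      using S tn sum_nonneg_eq_0_iff[of UNIV "\<lambda>x. \<pi> x * Q x v"] by simp
    then show ?case using uv by simp
  qed
  have "\<forall>u. \<pi> u = 0" using zero irr by (simp add: ctmc_irreducible_def)
  then show False using st by (simp add: ctmc_stationary_def)
qed

lemma sq_le_sum: "p \<ge> 0 \<Longrightarrow> q \<ge> 0 \<Longrightarrow> (sqrt p - sqrt q)^2 \<le> p + q"
  by (simp add: power2_diff)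

theorem lemma2p3:
  fixes Q :: "'a::finite \<Rightarrow> 'a \<Rightarrow> real" and \<pi> :: "'a \<Rightarrow> real" and t :: real
  assumes "ctmc_generator Q"
    and "ctmc_irreducible Q"
    and "ctmc_stationary Q \<pi>"
    and "ctmc_reversible Q \<pi>"
    and "t \<ge> 0"
  shows "hellinger_dist Q \<pi> (2 * t) \<le> 7 * (hellinger_dist Q \<pi> t) powr (5/4)"
proof -
  note gen = assms(1) and st = assms(3) and rv = assms(4)
  define P where "P = ctmc_semigroup Q t"
  define P2 where "P2 = ctmc_semigroup Q (2 * t)"
  define f where "f x = sqrt (\<Sum>y\<in>UNIV. (sqrt (P x y) - sqrt (\<pi> y))^2)" for x
  define f2 where "f2 x = sqrt (\<Sum>y\<in>UNIV. (sqrt (P2 x y) - sqrt (\<pi> y))^2)" for x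
  define d where "d = hellinger_dist Q \<pi> t"
  have dM: "d = Max (range f)" unfolding d_def hellinger_dist_def f_def P_def ..
  have d2M: "hellinger_dist Q \<pi> (2 * t) = Max (range f2)" unfolding hellinger_dist_def f2_def P2_def ..
  have fle: "f x \<le> d" for x unfolding dM by (rule Max_ge) auto
  have d0: "d \<ge> 0"
  proof -
    have "0 \<le> f undefined" unfolding f_def by (simp add: sum_nonneg)
    then show ?thesis using fle[of undefined] by linarith
  qed
  have pos: "\<And>x. \<pi> x > 0" using pi_pos[OF gen assms(2) st] .
  have psum: "(\<Sum>x\<in>UNIV. \<pi> x) = 1" using st by (simp add: ctmc_stationary_def)
  have Pnn: "\<And>x y. P x y \<ge> 0" unfolding P_def by (rule P_nonneg[OF gen assms(5)])
  have P2nn: "\<And>x y. P2 x y \<ge> 0" unfolding P2_def by (rule P_nonneg[OF gen]) (simp add: assms(5))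
  have rows: "\<And>x. (\<Sum>y\<in>UNIV. P x y) = 1" unfolding P_def by (rule P_rowsum[OF gen])
  have rows2: "\<And>x. (\<Sum>y\<in>UNIV. P2 x y) = 1" unfolding P2_def by (rule P_rowsum[OF gen])
  have rev: "\<And>x y. \<pi> x * P x y = \<pi> y * P y x" unfolding P_def by (rule P_rev[OF rv])
  have P2: "\<And>x y. P2 x y = (\<Sum>z\<in>UNIV. P x z * P z y)" unfolding P2_def P_def by (rule P_double)
  have dx: "(\<Sum>y\<in>UNIV. (sqrt (P x y) - sqrt (\<pi> y))^2) \<le> d^2" for x
  proof -
    have "(\<Sum>y\<in>UNIV. (sqrt (P x y) - sqrt (\<pi> y))^2) = (f x)^2"
      unfolding f_def by (simp add: sum_nonneg)
    also have "\<dots> \<le> d^2" using fle[of x] by (intro power_mono) (simp_all add: f_def sum_nonneg)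
    finally show ?thesis .
  qed
  have core': "(\<Sum>y\<in>UNIV. (sqrt (P2 x y) - sqrt (\<pi> y))^2) \<le> 34 * d^4 + 8 * d^3" for x
    by (rule core[OF pos psum Pnn rows rev P2 dx d0])
  have two: "(\<Sum>y\<in>UNIV. (sqrt (P2 x y) - sqrt (\<pi> y))^2) \<le> 2" for x
  proof -
    have "(\<Sum>y\<in>UNIV. (sqrt (P2 x y) - sqrt (\<pi> y))^2) \<le> (\<Sum>y\<in>UNIV. P2 x y + \<pi> y)"
      by (rule sum_mono, rule sq_le_sum) (simp_all add: P2nn less_imp_le[OF pos])
    also have "\<dots> = 2" by (simp add: sum.distrib rows2 psum)
    finally show ?thesis .
  qed
  have pw: "(7 * d powr (5/4))^2 = 49 * d powr (5/2)"
    by (simp add: power2_eq_square powr_add[symmetric])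
  have bound: "f2 x \<le> 7 * d powr (5/4)" for x
  proof (cases "d \<ge> 1")
    case True
    have "f2 x \<le> sqrt 2" unfolding f2_def using two[of x] by simp
    also have "\<dots> \<le> 7" by (simp add: real_sqrt_le_iff[of 2 "7^2", simplified])
    also have "7 \<le> 7 * d powr (5/4)" using ge_one_powr_ge_zero[OF True, of "5/4"] by simp
    finally show ?thesis .
  next
    case False
    have "(\<Sum>y\<in>UNIV. (sqrt (P2 x y) - sqrt (\<pi> y))^2) \<le> 34 * d^4 + 8 * d^3" by (rule core')
    also have "\<dots> \<le> 42 * d^3"
    proof -
      have "d^4 \<le> d^3" using False d0 by (simp add: power_decreasing)
      then show ?thesis by simp
    qed
    also have "d^3 = d powr 3" using d0 by (simp add: powr_realpow'[of d 3, simplified])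
    also have "42 * d powr 3 \<le> 49 * d powr (5/2)"
    proof -
      have "d powr 3 \<le> d powr (5/2)" using False d0 by (intro powr_mono') simp_all
      then show ?thesis using powr_ge_zero[of d 3] by linarith
    qed
    also have "\<dots> = (7 * d powr (5/4))^2" by (rule pw[symmetric])
    finally have "f2 x \<le> sqrt ((7 * d powr (5/4))^2)" unfolding f2_def by (rule real_sqrt_le_mono)
    moreover have "sqrt ((7 * d powr (5/4))^2) = 7 * d powr (5/4)"
      by (rule real_sqrt_unique) simp_all
    ultimately show ?thesis by simp
  qed
  have "hellinger_dist Q \<pi> (2 * t) \<in> range f2" unfolding d2M by (rule Max_in) auto
  then obtain x where "hellinger_dist Q \<pi> (2 * t) = f2 x" by auto
  then show ?thesis using bound[of x] unfolding d_def by simp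
qed

end
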